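(* Let $\rho>0$, let $f\colon\mathbb{R}^d\to\mathbb{R}$ be $C^1$ with $\rho$-Lipschitz gradient, let $r\colon\mathbb{R}^d\to\mathbb{R}\cup\{+\infty\}$ be a proper closed convex function, and $\varphi=f+r$. Suppose: (A1) one can generate i.i.d. realizations $\xi_0,\xi_1,\ldots\sim P$ from a probability space $(\Omega,\mathcal{F},P)$; (A2) there is an open set $U\supseteq\mathrm{dom}\,r$ and a measurable map $G\colon U\times\Omega\to\mathbb{R}^d$ with $\mathbb{E}_\xi[G(x,\xi)]=\nabla f(x)$ for all $x\in U$; ($\overline{\rm A3}$) there is $\sigma\ge0$ with $\mathbb{E}_\xi\|G(x,\xi)-\nabla f(x)\|^2\le\sigma^2$ for all $x\in\mathrm{dom}\,r$. Let $x_0\in\mathrm{dom}\,r$ and $x_{t+1}=\mathrm{prox}_{\alpha_t r}\big(x_t-\alpha_tG(x_t,\xi_t)\big)$ for $t\ge0$. Fix $\bar\rho>\rho$ and stepsizes $\alpha_t\in(0,1/\bar\rho]$, and let $\hat x_t=\operatorname{argmin}_y\{\varphi(y)+\frac{\bar\rho}{2}\|y-x_t\|^2\}$. Then for every $t\ge0$, $$\mathbb{E}_t\|x_{t+1}-\hat x_t\|^2\le\|x_t-\hat x_t\|^2+\alpha_t^2\sigma^2-\alpha_t(\bar\rho-\rho)\|x_t-\hat x_t\|^2.$$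
   Context: $\mathrm{prox}_{\alpha r}(x)=\operatorname{argmin}_y\{r(y)+\frac{1}{2\alpha}\|y-x\|^2\}$. $\mathbb{E}_t$ denotes expectation conditioned on $\xi_0,\ldots,\xi_{t-1}$. *)

theory Defs
  imports "HOL-Probability.Probability"
begin

definition edom :: "('a \<Rightarrow> ereal) \<Rightarrow> 'a set" where
  "edom r = {x. r x < \<infinity>}"

definition proper_fun :: "('a \<Rightarrow> ereal) \<Rightarrow> bool" where
  "proper_fun r \<longleftrightarrow> (\<forall>x. r x \<noteq> -\<infinity>) \<and> (\<exists>x. r x < \<infinity>)"

definition closed_fun :: "('a::topological_space \<Rightarrow> ereal) \<Rightarrow> bool" where
  "closed_fun r \<longleftrightarrow> closed {(x, y::real). r x \<le> ereal y}"

definition convex_fun :: "('a::real_vector \<Rightarrow> ereal) \<Rightarrow> bool" where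
  "convex_fun r \<longleftrightarrow> convex {(x, y::real). r x \<le> ereal y}"

definition argmin :: "('a \<Rightarrow> 'b::linorder) \<Rightarrow> 'a" where
  "argmin g = (THE y. \<forall>z. g y \<le> g z)"

definition prox :: "real \<Rightarrow> ('a::real_normed_vector \<Rightarrow> ereal) \<Rightarrow> 'a \<Rightarrow> 'a" where
  "prox \<alpha> r x = argmin (\<lambda>y. r y + ereal (norm (y - x) ^ 2 / (2 * \<alpha>)))"

end

theory Submission
  imports Defs
begin


lemma cf_ineq:
  fixes r :: "'a::real_vector \<Rightarrow> ereal"
  assumes cv: "convex_fun r" and x: "r x = ereal a" and y: "r y = ereal b"
    and t: "0 \<le> t" "t \<le> 1"
  shows "r ((1-t) *\<^sub>R x + t *\<^sub>R y) \<le> ereal ((1-t)*a + t*b)"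
proof -
  let ?E = "{(x, y::real). r x \<le> ereal y}"
  have "(x,a) \<in> ?E" "(y,b) \<in> ?E" using x y by auto
  with cv t have "(1-t) *\<^sub>R (x,a) + t *\<^sub>R (y,b) \<in> ?E"
    unfolding convex_fun_def convex_def by (meson diff_add_cancel diff_ge_0_iff_ge)
  then show ?thesis by simp
qed

lemma affine_minorant:
  fixes r :: "'a::euclidean_space \<Rightarrow> ereal"
  assumes pr: "proper_fun r" and cl: "closed_fun r" and cv: "convex_fun r"
  shows "\<exists>a b. \<forall>x. ereal (inner a x + b) \<le> r x"
proof -
  let ?E = "{(x, y::real). r x \<le> ereal y}"
  obtain x1 where x1: "r x1 < \<infinity>" using pr unfolding proper_fun_def by auto
  then obtain c where c: "r x1 = ereal c" using pr unfolding proper_fun_def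
    by (cases "r x1") auto
  have "(x1, c - 1) \<notin> ?E" using c by auto
  from separating_hyperplane_closed_point[OF cv[unfolded convex_fun_def] cl[unfolded closed_fun_def] this]
  obtain A b where Ab: "inner A (x1, c-1) < b" "\<forall>z\<in>?E. inner A z > b" by blast
  obtain a1 a2 where A: "A = (a1, a2)" by (cases A)
  have "(x1, c) \<in> ?E" using c by auto
  with Ab A have "inner a1 x1 + a2 * (c - 1) < b" "b < inner a1 x1 + a2 * c" by auto
  then have a2: "a2 > 0" by (simp add: algebra_simps)
  have "ereal (inner (- a1 /\<^sub>R a2) x + b / a2) \<le> r x" for x
  proof (cases "r x")
    case (real v)
    then have "(x, v) \<in> ?E" by auto
    with Ab A have "b < inner a1 x + a2 * v" by auto
    then have "inner (- a1 /\<^sub>R a2) x + b / a2 \<le> v" using a2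
      by (simp add: field_simps inner_commute)
    then show ?thesis using real by simp
  next
    case PInf then show ?thesis by simp
  next
    case MInf then show ?thesis using pr unfolding proper_fun_def by auto
  qed
  then show ?thesis by blast
qed



lemma foc:
  fixes r :: "'a::real_inner \<Rightarrow> ereal" and s :: "'a \<Rightarrow> real"
  assumes cv: "convex_fun r" and ru: "r u = ereal a" and ry: "r y = ereal b"
    and mn: "\<And>z. r u + ereal (s u) \<le> r z + ereal (s z)"
    and up: "\<And>z. s z \<le> s u + inner g (z - u) + L/2 * norm (z - u)^2" and L: "L \<ge> 0"
  shows "a \<le> b + inner g (y - u)"
proof (rule ccontr)
  assume na: "\<not> ?thesis"
  define e where "e = a - b - inner g (y - u)"
  define d where "d = y - u"
  have e: "e > 0" using na e_def by auto
  define K where "K = L * norm d ^ 2"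
  have K: "K \<ge> 0" using L K_def by auto
  define t where "t = min 1 (e / (K + 1))"
  have t: "0 < t" "t \<le> 1" using e K t_def by auto
  have tK: "t * K < e"
  proof -
    have "t * K \<le> e / (K+1) * K" using K t_def by (intro mult_right_mono) auto
    also have "\<dots> < e" using e K by (simp add: field_simps)
    finally show ?thesis .
  qed
  define w where "w = (1-t) *\<^sub>R u + t *\<^sub>R y"
  have wd: "w - u = t *\<^sub>R d" unfolding w_def d_def by (simp add: algebra_simps)
  have rw: "r w \<le> ereal ((1-t)*a + t*b)" unfolding w_def
    using cf_ineq[OF cv ru ry] t by auto
  have sw: "s w \<le> s u + t * inner g d + L/2 * t^2 * norm d ^ 2"
    using up[of w] unfolding wd by (simp add: power_mult_distrib)
  have "ereal (a + s u) \<le> r w + ereal (s w)" using mn[of w] ru by simp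
  also have "\<dots> \<le> ereal ((1-t)*a + t*b) + ereal (s w)" using rw by (intro add_right_mono) auto
  finally have "a + s u \<le> (1-t)*a + t*b + s w" by simp
  with sw have "t * a \<le> t * b + t * inner g d + t * (t * K / 2)"
    unfolding K_def by (simp add: algebra_simps power2_eq_square)
  then have "a \<le> b + inner g d + t * K / 2" using t
    by (metis (no_types, lifting) distrib_left mult_le_cancel_left_pos)
  with tK e K t show False unfolding e_def d_def by linarith
qed

lemma growth:
  fixes r :: "'a::real_inner \<Rightarrow> ereal" and s :: "'a \<Rightarrow> real"
  assumes ru: "r u = ereal a"
    and fo: "\<And>y b. r y = ereal b \<Longrightarrow> a \<le> b + inner g (y - u)"
    and lo: "\<And>z. s z \<ge> s u + inner g (z - u) + m/2 * norm (z - u)^2"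
    and nm: "\<And>z. r z \<noteq> -\<infinity>"
  shows "r u + ereal (s u) + ereal (m/2 * norm (y - u)^2) \<le> r y + ereal (s y)"
proof (cases "r y")
  case (real b)
  have "a + s u + m/2 * norm (y - u)^2 \<le> b + s y" using fo[OF real] lo[of y] by linarith
  then show ?thesis using ru real by simp
next
  case PInf then show ?thesis using ru by simp
next
  case MInf then show ?thesis using nm by simp
qed



lemma inner_lb: "inner (a::'a::real_inner) b \<ge> - (norm a * norm b)"
  using Cauchy_Schwarz_ineq2[of a b] by linarith

lemma exist_min:
  fixes r :: "'a::euclidean_space \<Rightarrow> ereal" and s :: "'a \<Rightarrow> real"
  assumes pr: "proper_fun r" and cl: "closed_fun r" and cv: "convex_fun r"
    and sc: "continuous_on UNIV s"
    and lo: "\<And>y. s y \<ge> c0 + inner g0 (y - c) + m/2 * norm (y - c)^2" and m: "m > 0"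
  shows "\<exists>u. \<forall>y. r u + ereal (s u) \<le> r y + ereal (s y)"
proof -
  let ?E = "{(x, y::real). r x \<le> ereal y}"
  obtain a b where ab: "\<And>x. ereal (inner a x + b) \<le> r x" using affine_minorant[OF pr cl cv] by blast
  obtain x1 where x1: "r x1 < \<infinity>" using pr unfolding proper_fun_def by auto
  then obtain c1 where c1: "r x1 = ereal c1" using pr unfolding proper_fun_def
    by (cases "r x1") auto
  define C where "C = c1 + s x1"
  define w where "w = a + g0"
  define d' where "d' = inner a c + b + c0"
  define Q where "Q y = inner w (y - c) + d' + m/2 * norm (y - c)^2" for y
  have Qle: "Q y \<le> v + s y" if "r y = ereal v" for y v
  proof -
    have "inner a y + b \<le> v" using ab[of y] that by simp
    moreover have "inner a y = inner a c + inner a (y - c)" by (simp add: inner_diff_right)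
    ultimately show ?thesis using lo[of y] unfolding Q_def w_def d'_def
      by (simp add: inner_add_left)
  qed
  define R where "R = 1 + 2 * (norm w + \<bar>C - d'\<bar>) / m"
  have R1: "R \<ge> 1" unfolding R_def using m by (simp add: field_simps)
  have Qbig: "Q y > C" if "norm (y - c) > R" for y
  proof -
    define n where "n = norm (y - c)"
    have n: "n > R" using that n_def by simp
    have "m/2 * n^2 > m/2 * n * R" using n R1 m by (simp add: power2_eq_square)
    also have "m/2 * n * R = m/2 * n + n * (norm w + \<bar>C - d'\<bar>)" unfolding R_def
      using m by (simp add: field_simps)
    finally have A: "m/2 * n^2 > m/2 * n + n * norm w + n * \<bar>C - d'\<bar>" by (simp add: algebra_simps)
    have "n * \<bar>C - d'\<bar> \<ge> \<bar>C - d'\<bar>" using n R1 mult_right_mono[of 1 n "\<bar>C - d'\<bar>"] by simp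
    moreover have "inner w (y - c) \<ge> - (norm w * n)" using inner_lb n_def by auto
    moreover have "m/2 * n \<ge> 0" using m n R1 by simp
    ultimately show ?thesis using A unfolding Q_def n_def[symmetric] by (simp add: algebra_simps)
  qed
  define lo' where "lo' = - (norm a * (norm c + R)) + b"
  define hi where "hi = C - c0 + norm g0 * R"
  have lo'le: "lo' \<le> v" if "r y = ereal v" "norm (y - c) \<le> R" for y v
  proof -
    have "norm y \<le> norm c + R" using that(2) norm_triangle_ineq2[of y c] by linarith
    then have "norm a * norm y \<le> norm a * (norm c + R)" by (simp add: mult_left_mono)
    moreover have "inner a y + b \<le> v" using ab[of y] that by simp
    ultimately show ?thesis using inner_lb[of a y] unfolding lo'_def by linarith
  qed
  have sge: "s y \<ge> c0 - norm g0 * R" if "norm (y - c) \<le> R" for y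
  proof -
    have "norm g0 * norm (y - c) \<le> norm g0 * R" using that by (simp add: mult_left_mono)
    then show ?thesis using lo[of y] inner_lb[of g0 "y - c"] m
      by (smt (verit) zero_le_divide_iff zero_le_mult_iff zero_le_power2)
  qed
  define S where "S = ?E \<inter> (cball c R \<times> {lo'..hi})"
  have cS: "compact S" unfolding S_def
    by (intro closed_Int_compact compact_Times compact_cball compact_Icc)
       (use cl in \<open>auto simp: closed_fun_def\<close>)
  have x1R: "norm (x1 - c) \<le> R" using Qle[OF c1] Qbig[of x1] unfolding C_def by force
  have p1: "(x1, c1) \<in> S" unfolding S_def using c1 x1R lo'le[OF c1 x1R] sge[OF x1R]
    by (auto simp: dist_norm norm_minus_commute hi_def C_def)
  have "continuous_on S (\<lambda>p. snd p + s (fst p))"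
    by (intro continuous_intros continuous_on_compose2[OF sc]) auto
  then obtain p where pS: "p \<in> S" and pmin: "\<And>q. q \<in> S \<Longrightarrow> snd p + s (fst p) \<le> snd q + s (fst q)"
    using continuous_attains_inf[OF cS] p1 by blast
  obtain u v where p: "p = (u, v)" by (cases p)
  have ruv: "r u \<le> ereal v" using pS p S_def by auto
  have vC: "v + s u \<le> C" using pmin[OF p1] p C_def by simp
  have "r u + ereal (s u) \<le> r y + ereal (s y)" for y
  proof (cases "r y")
    case (real bb)
    have "v + s u \<le> bb + s y"
    proof (cases "(y, bb) \<in> S")
      case True then show ?thesis using pmin[OF True] p by simp
    next
      case False
      show ?thesis
      proof (cases "norm (y - c) \<le> R")
        case True
        with False real lo'le[OF real True] have "bb > hi" unfolding S_def
          by (auto simp: dist_norm norm_minus_commute)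
        then show ?thesis using sge[OF True] vC unfolding hi_def by linarith
      next
        case False
        then show ?thesis using Qbig[of y] Qle[OF real] vC by linarith
      qed
    qed
    then have "ereal v + ereal (s u) \<le> r y + ereal (s y)" using real by simp
    then show ?thesis using ruv by (meson add_right_mono order_trans)
  next
    case PInf then show ?thesis using ruv by simp
  next
    case MInf then show ?thesis using pr unfolding proper_fun_def by auto
  qed
  then show ?thesis by blast
qed



lemma argmin_eqI:
  assumes "\<And>y. y \<noteq> u \<Longrightarrow> g u < g y"
  shows "argmin g = u"
  unfolding argmin_def
proof (rule the_equality)
  show "\<forall>z. g u \<le> g z" using assms by (metis order_less_imp_le order_refl)
  fix y assume "\<forall>z. g y \<le> g z"
  then show "y = u" using assms by (metis leD)
qed

lemma inner_divR: "inner (x /\<^sub>R a) w = inner x w / a"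
  by (simp add: inner_scaleR_left divide_inverse_commute)

lemma sq_exp: "norm (y - z)^2 = norm (y - u)^2 + 2 * inner (u - z) (y - u) + norm (u - (z::'a::real_inner))^2"
proof -
  have "y - z = (y - u) + (u - z)" by simp
  then have "norm (y - z)^2 = inner ((y - u) + (u - z)) ((y - u) + (u - z))"
    by (metis power2_norm_eq_inner)
  also have "\<dots> = inner (y - u) (y - u) + 2 * inner (u - z) (y - u) + inner (u - z) (u - z)"
    by (simp only: inner_add_left inner_add_right inner_commute[of "y-u" "u-z"])
  also have "\<dots> = norm (y - u)^2 + 2 * inner (u - z) (y - u) + norm (u - z)^2"
    by (simp add: power2_norm_eq_inner)
  finally show ?thesis .
qed

lemma prox_char:
  fixes r :: "'a::real_inner \<Rightarrow> ereal"
  assumes al: "\<alpha> > 0" and nm: "\<And>z. r z \<noteq> -\<infinity>" and rv: "r v = ereal a"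
    and fo: "\<And>y b. r y = ereal b \<Longrightarrow> a \<le> b + inner ((v - z) /\<^sub>R \<alpha>) (y - v)"
  shows "prox \<alpha> r z = v"
  unfolding prox_def
proof (rule argmin_eqI)
  fix y assume yv: "y \<noteq> v"
  let ?s = "\<lambda>y. norm (y - z) ^ 2 / (2 * \<alpha>)"
  have lo: "?s y' \<ge> ?s v + inner ((v - z) /\<^sub>R \<alpha>) (y' - v) + (1/\<alpha>)/2 * norm (y' - v)^2" for y'
    using sq_exp[of y' z v] al unfolding inner_divR by (simp add: field_simps)
  have g: "r v + ereal (?s v) + ereal ((1/\<alpha>)/2 * norm (y - v)^2) \<le> r y + ereal (?s y)"
    by (rule growth[where r=r and u=v and y=y and s="?s" and m="1/\<alpha>" and g="(v - z) /\<^sub>R \<alpha>", OF rv fo lo nm])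
  have "(1/\<alpha>)/2 * norm (y - v)^2 > 0" using yv al by simp
  then have "r v + ereal (?s v) < r v + ereal (?s v) + ereal ((1/\<alpha>)/2 * norm (y - v)^2)"
    using rv by simp
  with g show "r v + ereal (?s v) < r y + ereal (?s y)" by simp
qed

lemma prox_foc:
  fixes r :: "'a::euclidean_space \<Rightarrow> ereal"
  assumes al: "\<alpha> > 0" and pr: "proper_fun r" and cl: "closed_fun r" and cv: "convex_fun r"
  shows "\<exists>a. r (prox \<alpha> r z) = ereal a \<and>
     (\<forall>y b. r y = ereal b \<longrightarrow> a \<le> b + inner ((prox \<alpha> r z - z) /\<^sub>R \<alpha>) (y - prox \<alpha> r z))"
proof -
  have nm: "\<And>z. r z \<noteq> -\<infinity>" using pr unfolding proper_fun_def by auto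
  let ?s = "\<lambda>y. norm (y - z) ^ 2 / (2 * \<alpha>)"
  have "continuous_on UNIV ?s" by (intro continuous_intros) (use al in auto)
  from exist_min[OF pr cl cv this, of 0 0 z "1/\<alpha>"] al
  obtain u where u: "\<And>y. r u + ereal (?s u) \<le> r y + ereal (?s y)" by auto
  obtain x1 where x1: "r x1 < \<infinity>" using pr unfolding proper_fun_def by auto
  have "r u \<noteq> \<infinity>"
  proof
    assume "r u = \<infinity>"
    then have "r x1 + ereal (?s x1) = \<infinity>" using u[of x1] by simp
    with x1 show False by auto
  qed
  then obtain a where a: "r u = ereal a" using nm[of u] by (cases "r u") auto
  have up: "?s y' \<le> ?s u + inner ((u - z) /\<^sub>R \<alpha>) (y' - u) + (1/\<alpha>)/2 * norm (y' - u)^2" for y'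
    using sq_exp[of y' z u] al unfolding inner_divR by (simp add: field_simps)
  have fo: "a \<le> b + inner ((u - z) /\<^sub>R \<alpha>) (y - u)" if "r y = ereal b" for y b
    by (rule foc[OF cv a that u up]) (use al in simp)
  have "prox \<alpha> r z = u" by (rule prox_char[where z=z and r=r, OF al nm a fo])
  then show ?thesis using a fo by auto
qed

lemma prox_dom:
  fixes r :: "'a::euclidean_space \<Rightarrow> ereal"
  assumes "\<alpha> > 0" "proper_fun r" "closed_fun r" "convex_fun r"
  shows "prox \<alpha> r z \<in> edom r"
  using prox_foc[OF assms, of z] unfolding edom_def by auto

lemma prox_nonexp:
  fixes r :: "'a::euclidean_space \<Rightarrow> ereal"
  assumes al: "\<alpha> > 0" and pr: "proper_fun r" and cl: "closed_fun r" and cv: "convex_fun r"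
  shows "norm (prox \<alpha> r z1 - prox \<alpha> r z2) \<le> norm (z1 - z2)"
proof -
  obtain a1 where a1: "r (prox \<alpha> r z1) = ereal a1"
    "\<And>y b. r y = ereal b \<Longrightarrow> a1 \<le> b + inner ((prox \<alpha> r z1 - z1) /\<^sub>R \<alpha>) (y - prox \<alpha> r z1)"
    using prox_foc[OF assms, of z1] by blast
  obtain a2 where a2: "r (prox \<alpha> r z2) = ereal a2"
    "\<And>y b. r y = ereal b \<Longrightarrow> a2 \<le> b + inner ((prox \<alpha> r z2 - z2) /\<^sub>R \<alpha>) (y - prox \<alpha> r z2)"
    using prox_foc[OF assms, of z2] by blast
  define u1 where "u1 = prox \<alpha> r z1"
  define u2 where "u2 = prox \<alpha> r z2"
  have "a1 \<le> a2 + inner ((u1 - z1) /\<^sub>R \<alpha>) (u2 - u1)" using a1(2)[OF a2(1)] u1_def u2_def by simp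
  moreover have "a2 \<le> a1 + inner ((u2 - z2) /\<^sub>R \<alpha>) (u1 - u2)" using a2(2)[OF a1(1)] u1_def u2_def by simp
  ultimately have "0 \<le> inner ((u1 - z1) /\<^sub>R \<alpha>) (u2 - u1) + inner ((u2 - z2) /\<^sub>R \<alpha>) (u1 - u2)" by linarith
  also have "\<dots> = (inner (z1 - z2) (u1 - u2) - inner (u1 - u2) (u1 - u2)) / \<alpha>"
    using al unfolding inner_divR by (simp add: inner_diff_left inner_diff_right inner_commute field_simps)
  finally have "norm (u1 - u2)^2 \<le> inner (z1 - z2) (u1 - u2)" using al
    by (simp add: power2_norm_eq_inner zero_le_divide_iff)
  also have "\<dots> \<le> norm (z1 - z2) * norm (u1 - u2)" by (rule norm_cauchy_schwarz)
  finally have "norm (u1 - u2) * norm (u1 - u2) \<le> norm (z1 - z2) * norm (u1 - u2)"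
    by (simp add: power2_eq_square)
  then show ?thesis unfolding u1_def u2_def
    by (metis mult_right_le_imp_le norm_ge_zero order.trans zero_less_norm_iff order_refl le_less)
qed



lemma mono_grad_tangent:
  fixes h :: "'a::real_inner \<Rightarrow> real"
  assumes hd: "\<And>x. (h has_derivative (\<lambda>v. inner (gh x) v)) (at x)"
    and mo: "\<And>x y. inner (gh x - gh y) (x - y) \<ge> 0"
  shows "h b \<ge> h a + inner (gh a) (b - a)"
proof -
  define d where "d = b - a"
  define \<psi> where "\<psi> t = h (a + t *\<^sub>R d)" for t
  define \<psi>' where "\<psi>' t = inner (gh (a + t *\<^sub>R d)) d" for t
  have der: "(\<psi> has_real_derivative \<psi>' t) (at t)" for t
  proof -
    have d1: "((\<lambda>t. a + t *\<^sub>R d) has_derivative (\<lambda>t'. t' *\<^sub>R d)) (at t)"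
      by (auto intro!: derivative_eq_intros)
    have "((\<lambda>t. h (a + t *\<^sub>R d)) has_derivative (\<lambda>t'. inner (gh (a + t *\<^sub>R d)) (t' *\<^sub>R d))) (at t)"
      by (rule has_derivative_compose[OF d1 hd])
    then show ?thesis unfolding has_field_derivative_def \<psi>_def \<psi>'_def
      by (rule has_derivative_eq_rhs) (auto simp: fun_eq_iff)
  qed
  have "convex_on UNIV \<psi>"
  proof (rule convex_on_realI[OF _ der])
    show "connected (UNIV::real set)" by simp
    fix x y :: real assume "x \<le> y"
    have "0 \<le> inner (gh (a + y *\<^sub>R d) - gh (a + x *\<^sub>R d)) ((a + y *\<^sub>R d) - (a + x *\<^sub>R d))"
      by (rule mo)
    also have "(a + y *\<^sub>R d) - (a + x *\<^sub>R d) = (y - x) *\<^sub>R d" by (simp add: algebra_simps)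
    finally have "0 \<le> (y - x) * (\<psi>' y - \<psi>' x)" unfolding \<psi>'_def
      by (simp add: inner_diff_left)
    then show "\<psi>' x \<le> \<psi>' y" using \<open>x \<le> y\<close>
      by (cases "x = y") (auto simp: zero_le_mult_iff)
  qed
  from convex_on_imp_above_tangent[OF this, of 0 1 "\<psi>' 0"] der[of 0]
  have "\<psi> 1 - \<psi> 0 \<ge> \<psi>' 0" by (simp add: has_field_derivative_at_within)
  then show ?thesis unfolding \<psi>_def \<psi>'_def d_def by simp
qed


lemma descent_bounds:
  fixes f :: "'a::real_inner \<Rightarrow> real"
  assumes fd: "\<And>x. (f has_derivative (\<lambda>h. gf x \<bullet> h)) (at x)"
    and lip: "\<And>x y. norm (gf x - gf y) \<le> \<rho> * norm (x - y)"
  shows "f b \<ge> f a + inner (gf a) (b - a) - \<rho>/2 * norm (b - a)^2"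
    and "f b \<le> f a + inner (gf a) (b - a) + \<rho>/2 * norm (b - a)^2"
proof -
  have nd: "((\<lambda>x. \<rho>/2 * norm x ^ 2) has_derivative (\<lambda>v. inner (\<rho> *\<^sub>R x) v)) (at x)" for x
  proof -
    have d0: "((\<lambda>x. \<rho>/2 * inner x x) has_derivative (\<lambda>v. \<rho>/2 * (inner v x + inner x v))) (at x)"
      by (auto intro!: derivative_eq_intros)
    have e1: "(\<lambda>x. \<rho>/2 * norm x ^ 2) = (\<lambda>x. \<rho>/2 * inner x x)" by (simp add: power2_norm_eq_inner)
    have e2: "(\<lambda>v. \<rho>/2 * (inner v x + inner x v)) = (\<lambda>v. inner (\<rho> *\<^sub>R x) v)"
      by (simp add: fun_eq_iff inner_commute algebra_simps)
    show ?thesis unfolding e1 e2[symmetric] by (rule d0)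
  qed
  have cs: "inner (gf x - gf y) (x - y) \<le> \<rho> * norm (x - y)^2" for x y
  proof -
    have "inner (gf x - gf y) (x - y) \<le> norm (gf x - gf y) * norm (x - y)" by (rule norm_cauchy_schwarz)
    also have "\<dots> \<le> \<rho> * norm (x - y) * norm (x - y)" by (rule mult_right_mono[OF lip]) simp
    finally show ?thesis by (simp add: power2_eq_square)
  qed
  have cs2: "inner (gf x - gf y) (x - y) \<ge> - (\<rho> * norm (x - y)^2)" for x y
  proof -
    have "- inner (gf x - gf y) (x - y) \<le> norm (gf x - gf y) * norm (x - y)"
      using Cauchy_Schwarz_ineq2[of "gf x - gf y" "x - y"] by linarith
    also have "\<dots> \<le> \<rho> * norm (x - y) * norm (x - y)" by (rule mult_right_mono[OF lip]) simp
    finally show ?thesis by (simp add: power2_eq_square)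
  qed
  have ex: "norm b ^2 = norm a ^2 + 2 * inner a (b - a) + norm (b - a)^2"
    using sq_exp[of b 0 a] by simp
  have "(\<lambda>x. f x + \<rho>/2 * norm x ^ 2) b \<ge> (\<lambda>x. f x + \<rho>/2 * norm x ^ 2) a + inner (gf a + \<rho> *\<^sub>R a) (b - a)"
  proof (rule mono_grad_tangent[where gh = "\<lambda>x. gf x + \<rho> *\<^sub>R x"])
    fix x show "((\<lambda>x. f x + \<rho>/2 * norm x ^ 2) has_derivative (\<lambda>v. inner (gf x + \<rho> *\<^sub>R x) v)) (at x)"
      using has_derivative_add[OF fd nd] by (simp add: inner_add_left)
  next
    fix x y
    have "(gf x + \<rho> *\<^sub>R x) - (gf y + \<rho> *\<^sub>R y) = (gf x - gf y) + \<rho> *\<^sub>R (x - y)"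
      by (simp add: algebra_simps)
    then have "inner ((gf x + \<rho> *\<^sub>R x) - (gf y + \<rho> *\<^sub>R y)) (x - y) = inner (gf x - gf y) (x - y) + \<rho> * norm (x - y)^2"
      by (simp only: inner_add_left inner_scaleR_left power2_norm_eq_inner)
    then show "0 \<le> inner ((gf x + \<rho> *\<^sub>R x) - (gf y + \<rho> *\<^sub>R y)) (x - y)" using cs2[of x y] by linarith
  qed
  then have "f b + \<rho>/2 * norm b^2 \<ge> f a + \<rho>/2 * norm a^2 + inner (gf a) (b - a) + \<rho> * inner a (b - a)"
    by (simp add: inner_add_left)
  moreover have "\<rho>/2 * norm b^2 = \<rho>/2 * norm a^2 + \<rho> * inner a (b - a) + \<rho>/2 * norm (b - a)^2"
    by (subst ex) (simp add: ring_distribs)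
  ultimately show "f b \<ge> f a + inner (gf a) (b - a) - \<rho>/2 * norm (b - a)^2" by linarith
  have "(\<lambda>x. \<rho>/2 * norm x ^ 2 - f x) b \<ge> (\<lambda>x. \<rho>/2 * norm x ^ 2 - f x) a + inner (\<rho> *\<^sub>R a - gf a) (b - a)"
  proof (rule mono_grad_tangent[where gh = "\<lambda>x. \<rho> *\<^sub>R x - gf x"])
    fix x show "((\<lambda>x. \<rho>/2 * norm x ^ 2 - f x) has_derivative (\<lambda>v. inner (\<rho> *\<^sub>R x - gf x) v)) (at x)"
      using has_derivative_diff[OF nd fd] by (simp add: inner_diff_left)
  next
    fix x y
    have "(\<rho> *\<^sub>R x - gf x) - (\<rho> *\<^sub>R y - gf y) = \<rho> *\<^sub>R (x - y) - (gf x - gf y)"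
      by (simp add: algebra_simps)
    then have "inner ((\<rho> *\<^sub>R x - gf x) - (\<rho> *\<^sub>R y - gf y)) (x - y) = \<rho> * norm (x - y)^2 - inner (gf x - gf y) (x - y)"
      by (simp only: inner_diff_left inner_scaleR_left power2_norm_eq_inner)
    then show "0 \<le> inner ((\<rho> *\<^sub>R x - gf x) - (\<rho> *\<^sub>R y - gf y)) (x - y)" using cs[of x y] by linarith
  qed
  then have "\<rho>/2 * norm b^2 - f b \<ge> \<rho>/2 * norm a^2 - f a + \<rho> * inner a (b - a) - inner (gf a) (b - a)"
    by (simp add: inner_diff_left)
  moreover have "\<rho>/2 * norm b^2 = \<rho>/2 * norm a^2 + \<rho> * inner a (b - a) + \<rho>/2 * norm (b - a)^2"
    by (subst ex) (simp add: ring_distribs)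
  ultimately show "f b \<le> f a + inner (gf a) (b - a) + \<rho>/2 * norm (b - a)^2" by linarith
qed



context
  fixes f :: "'a::euclidean_space \<Rightarrow> real" and gf :: "'a \<Rightarrow> 'a" and \<rho> \<rho>b :: real
    and r :: "'a \<Rightarrow> ereal"
  assumes fd: "\<And>x. (f has_derivative (\<lambda>h. gf x \<bullet> h)) (at x)"
    and lip: "\<And>x y. norm (gf x - gf y) \<le> \<rho> * norm (x - y)"
    and rp: "\<rho> > 0" and rb: "\<rho>b > \<rho>"
    and pr: "proper_fun r" and cl: "closed_fun r" and cv: "convex_fun r"
begin

definition xh :: "'a \<Rightarrow> 'a" where
  "xh x = argmin (\<lambda>y. ereal (f y) + r y + ereal (\<rho>b / 2 * norm (y - x) ^ 2))"

lemma nm: "r z \<noteq> -\<infinity>" using pr unfolding proper_fun_def by auto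

lemma s_bounds:
  fixes x u z :: 'a
  defines "s \<equiv> \<lambda>y. f y + \<rho>b / 2 * norm (y - x) ^ 2"
  shows "s z \<le> s u + inner (gf u + \<rho>b *\<^sub>R (u - x)) (z - u) + (\<rho> + \<rho>b)/2 * norm (z - u)^2"
    and "s z \<ge> s u + inner (gf u + \<rho>b *\<^sub>R (u - x)) (z - u) + (\<rho>b - \<rho>)/2 * norm (z - u)^2"
proof -
  have e: "\<rho>b/2 * norm (z - x)^2 = \<rho>b/2 * norm (z - u)^2 + \<rho>b * inner (u - x) (z - u) + \<rho>b/2 * norm (u - x)^2"
    by (subst sq_exp[of z x u]) (simp add: ring_distribs)
  have i: "inner (gf u + \<rho>b *\<^sub>R (u - x)) (z - u) = inner (gf u) (z - u) + \<rho>b * inner (u - x) (z - u)"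
    by (simp add: inner_add_left)
  show "s z \<le> s u + inner (gf u + \<rho>b *\<^sub>R (u - x)) (z - u) + (\<rho> + \<rho>b)/2 * norm (z - u)^2"
    using descent_bounds(2)[OF fd lip, where a=u and b=z] e i
      ring_distribs(2)[of "\<rho>/2" "\<rho>b/2" "norm (z - u)^2"] unfolding s_def by (simp add: add_divide_distrib)
  show "s z \<ge> s u + inner (gf u + \<rho>b *\<^sub>R (u - x)) (z - u) + (\<rho>b - \<rho>)/2 * norm (z - u)^2"
    using descent_bounds(1)[OF fd lip, where a=u and b=z] e i
      left_diff_distrib[of "\<rho>b/2" "\<rho>/2" "norm (z - u)^2"] unfolding s_def by (simp add: diff_divide_distrib add_divide_distrib)
qed

lemma xh_foc:
  "\<exists>a. r (xh x) = ereal a \<and>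
     (\<forall>y b. r y = ereal b \<longrightarrow> a \<le> b + inner (gf (xh x) + \<rho>b *\<^sub>R (xh x - x)) (y - xh x))"
proof -
  define s where "s = (\<lambda>y. f y + \<rho>b / 2 * norm (y - x) ^ 2)"
  have obj: "(\<lambda>y. ereal (f y) + r y + ereal (\<rho>b / 2 * norm (y - x) ^ 2)) = (\<lambda>y. r y + ereal (s y))"
  proof -
    have "ereal a + c + ereal b = c + ereal (a + b)" for a b and c :: ereal by (cases c) auto
    then show ?thesis by (simp add: s_def)
  qed
  have fc: "continuous_on UNIV f"
    by (rule continuous_at_imp_continuous_on) (use has_derivative_continuous[OF fd] in auto)
  have sc: "continuous_on UNIV s" unfolding s_def by (intro continuous_intros fc)
  have lo: "s y \<ge> f x + inner (gf x) (y - x) + (\<rho>b - \<rho>)/2 * norm (y - x)^2" for y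
    using descent_bounds(1)[OF fd lip, where a=x and b=y] unfolding s_def by (simp add: algebra_simps diff_divide_distrib inner_diff_right)
  obtain u where u: "\<And>y. r u + ereal (s u) \<le> r y + ereal (s y)"
    using exist_min[OF pr cl cv sc, of "f x" "gf x" x "\<rho>b - \<rho>"] lo rb by force
  obtain x1 where x1: "r x1 < \<infinity>" using pr unfolding proper_fun_def by auto
  have "r u \<noteq> \<infinity>"
  proof
    assume "r u = \<infinity>"
    then have "r x1 + ereal (s x1) = \<infinity>" using u[of x1] by simp
    with x1 show False by auto
  qed
  then obtain a where a: "r u = ereal a" using nm[of u] by (cases "r u") auto
  let ?g = "gf u + \<rho>b *\<^sub>R (u - x)"
  have fo: "a \<le> b + inner ?g (y - u)" if "r y = ereal b" for y b
    by (rule foc[where s=s and L="\<rho> + \<rho>b", OF cv a that u]) (use s_bounds(1) rp rb in \<open>auto simp: s_def\<close>)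
  have "xh x = u" unfolding xh_def obj
  proof (rule argmin_eqI)
    fix y assume yu: "y \<noteq> u"
    have g: "r u + ereal (s u) + ereal ((\<rho>b - \<rho>)/2 * norm (y - u)^2) \<le> r y + ereal (s y)"
      by (rule growth[where r=r and u=u and y=y and s=s and g="?g", OF a fo])
         (use s_bounds(2) nm in \<open>auto simp: s_def\<close>)
    have "(\<rho>b - \<rho>)/2 * norm (y - u)^2 > 0" using yu rb by simp
    then have "r u + ereal (s u) < r u + ereal (s u) + ereal ((\<rho>b - \<rho>)/2 * norm (y - u)^2)"
      using a by simp
    with g show "r u + ereal (s u) < r y + ereal (s y)" by simp
  qed
  then show ?thesis using a fo by auto
qed

lemma xh_dom: "xh x \<in> edom r"
  using xh_foc[of x] unfolding edom_def by auto

lemma xh_prox: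
  assumes al: "\<alpha> > 0"
  shows "prox \<alpha> r (xh x - \<alpha> *\<^sub>R (gf (xh x) + \<rho>b *\<^sub>R (xh x - x))) = xh x"
proof -
  obtain a where a: "r (xh x) = ereal a"
    "\<And>y b. r y = ereal b \<Longrightarrow> a \<le> b + inner (gf (xh x) + \<rho>b *\<^sub>R (xh x - x)) (y - xh x)"
    using xh_foc[of x] by blast
  have e: "(xh x - (xh x - \<alpha> *\<^sub>R (gf (xh x) + \<rho>b *\<^sub>R (xh x - x)))) /\<^sub>R \<alpha> = gf (xh x) + \<rho>b *\<^sub>R (xh x - x)"
    using al by simp
  show ?thesis
    by (rule prox_char[where r=r and v="xh x", OF al nm a(1)]) (use a(2) in \<open>simp only: e\<close>)
qed

lemma xh_lip: "norm (xh x1 - xh x2) \<le> \<rho>b / (\<rho>b - \<rho>) * norm (x1 - x2)"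
proof -
  obtain a1 where a1: "r (xh x1) = ereal a1"
    "\<And>y b. r y = ereal b \<Longrightarrow> a1 \<le> b + inner (gf (xh x1) + \<rho>b *\<^sub>R (xh x1 - x1)) (y - xh x1)"
    using xh_foc[of x1] by blast
  obtain a2 where a2: "r (xh x2) = ereal a2"
    "\<And>y b. r y = ereal b \<Longrightarrow> a2 \<le> b + inner (gf (xh x2) + \<rho>b *\<^sub>R (xh x2 - x2)) (y - xh x2)"
    using xh_foc[of x2] by blast
  define u1 where "u1 = xh x1"
  define u2 where "u2 = xh x2"
  define g1 where "g1 = gf u1 + \<rho>b *\<^sub>R (u1 - x1)"
  define g2 where "g2 = gf u2 + \<rho>b *\<^sub>R (u2 - x2)"
  have "a1 \<le> a2 + inner g1 (u2 - u1)" using a1(2)[OF a2(1)] unfolding g1_def u1_def u2_def by simp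
  moreover have "a2 \<le> a1 + inner g2 (u1 - u2)" using a2(2)[OF a1(1)] unfolding g2_def u1_def u2_def by simp
  ultimately have "inner g1 (u2 - u1) + inner g2 (u1 - u2) \<ge> 0" by linarith
  then have A: "inner (g1 - g2) (u1 - u2) \<le> 0"
    by (simp add: inner_diff_left inner_diff_right inner_commute)
  have "g1 - g2 = (gf u1 - gf u2) + \<rho>b *\<^sub>R (u1 - u2) - \<rho>b *\<^sub>R (x1 - x2)"
    unfolding g1_def g2_def by (simp add: algebra_simps)
  then have B: "inner (g1 - g2) (u1 - u2) = inner (gf u1 - gf u2) (u1 - u2) + \<rho>b * norm (u1 - u2)^2 - \<rho>b * inner (x1 - x2) (u1 - u2)"
    by (simp only: inner_add_left inner_diff_left inner_scaleR_left power2_norm_eq_inner)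
  have C: "inner (gf u1 - gf u2) (u1 - u2) \<ge> - (\<rho> * norm (u1 - u2) * norm (u1 - u2))"
  proof -
    have "- inner (gf u1 - gf u2) (u1 - u2) \<le> norm (gf u1 - gf u2) * norm (u1 - u2)"
      using Cauchy_Schwarz_ineq2[of "gf u1 - gf u2" "u1 - u2"] by linarith
    also have "\<dots> \<le> \<rho> * norm (u1 - u2) * norm (u1 - u2)" by (rule mult_right_mono[OF lip]) simp
    finally show ?thesis by linarith
  qed
  have D: "inner (x1 - x2) (u1 - u2) \<le> norm (x1 - x2) * norm (u1 - u2)" by (rule norm_cauchy_schwarz)
  have "(\<rho>b - \<rho>) * norm (u1 - u2) * norm (u1 - u2) \<le> \<rho>b * inner (x1 - x2) (u1 - u2)"
    using A B C by (simp add: power2_eq_square algebra_simps)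
  also have "\<dots> \<le> \<rho>b * (norm (x1 - x2) * norm (u1 - u2))" using D rp rb by (simp add: mult_left_mono)
  finally have E: "(\<rho>b - \<rho>) * norm (u1 - u2) * norm (u1 - u2) \<le> \<rho>b * norm (x1 - x2) * norm (u1 - u2)"
    by (simp add: algebra_simps)
  show ?thesis
  proof (cases "u1 = u2")
    case True then show ?thesis unfolding u1_def u2_def using rp rb by simp
  next
    case False
    then have "(\<rho>b - \<rho>) * norm (u1 - u2) \<le> \<rho>b * norm (x1 - x2)" using E by simp
    then show ?thesis unfolding u1_def[symmetric] u2_def[symmetric] using rb
      by (simp add: field_simps)
  qed
qed

lemma xh_cont: "continuous_on UNIV xh"
  by (rule lipschitz_on_continuous_on[where L="\<rho>b / (\<rho>b - \<rho>)"], rule lipschitz_onI)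
     (use xh_lip rp rb in \<open>auto simp: dist_norm\<close>)


lemma step_bound:
  fixes P :: "'w measure" and G :: "'a \<Rightarrow> 'w \<Rightarrow> 'a" and \<sigma> \<alpha> :: real and x :: 'a
  assumes P: "prob_space P" and Gi: "integrable P (G x)" and unb: "(\<integral>w. G x w \<partial>P) = gf x"
    and var: "(\<integral>\<^sup>+ w. ennreal (norm (G x w - gf x) ^ 2) \<partial>P) \<le> ennreal (\<sigma> ^ 2)"
    and sg: "\<sigma> \<ge> 0" and al: "\<alpha> > 0" and al2: "\<alpha> \<le> 1 / \<rho>b"
  shows "(\<integral>\<^sup>+ w. ennreal (norm (prox \<alpha> r (x - \<alpha> *\<^sub>R G x w) - xh x) ^ 2) \<partial>P)
     \<le> ennreal (norm (x - xh x) ^ 2 + \<alpha>^2 * \<sigma>^2 - \<alpha> * (\<rho>b - \<rho>) * norm (x - xh x) ^ 2)"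
proof -
  interpret prob_space P by (rule P)
  define u where "u = xh x"
  define \<delta> where "\<delta> = x - u"
  define e where "e w = G x w - gf x" for w
  define v0 where "v0 = (1 - \<alpha> * \<rho>b) *\<^sub>R \<delta> - \<alpha> *\<^sub>R (gf x - gf u)"
  have arb: "\<alpha> * \<rho>b \<le> 1" using al2 rb rp by (simp add: field_simps)
  have pw: "norm (prox \<alpha> r (x - \<alpha> *\<^sub>R G x w) - u) \<le> norm (v0 - \<alpha> *\<^sub>R e w)" for w
  proof -
    have "prox \<alpha> r (x - \<alpha> *\<^sub>R G x w) - u = prox \<alpha> r (x - \<alpha> *\<^sub>R G x w) - prox \<alpha> r (u - \<alpha> *\<^sub>R (gf u + \<rho>b *\<^sub>R (u - x)))"
      using xh_prox[OF al, of x] u_def by simp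
    also have "norm \<dots> \<le> norm ((x - \<alpha> *\<^sub>R G x w) - (u - \<alpha> *\<^sub>R (gf u + \<rho>b *\<^sub>R (u - x))))"
      by (rule prox_nonexp[OF al pr cl cv])
    also have "(x - \<alpha> *\<^sub>R G x w) - (u - \<alpha> *\<^sub>R (gf u + \<rho>b *\<^sub>R (u - x))) = v0 - \<alpha> *\<^sub>R e w"
      unfolding v0_def e_def \<delta>_def by (simp add: algebra_simps)
    finally show ?thesis .
  qed
  have sq: "norm (v0 - \<alpha> *\<^sub>R e w)^2 = norm v0 ^2 - 2 * \<alpha> * inner v0 (e w) + \<alpha>^2 * norm (e w)^2" for w
    unfolding power2_norm_eq_inner by (simp add: inner_diff_left inner_diff_right inner_commute algebra_simps power2_eq_square)
  have Gm: "G x \<in> borel_measurable P" using Gi by (rule borel_measurable_integrable)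
  have ei: "integrable P e" unfolding e_def using Gi by auto
  have ie: "(\<integral>w. e w \<partial>P) = 0" unfolding e_def using Gi unb by (simp add: prob_space)
  have em: "(\<lambda>w. norm (e w)^2) \<in> borel_measurable P" unfolding e_def using Gm by measurable
  have var': "(\<integral>\<^sup>+ w. ennreal (norm (e w) ^ 2) \<partial>P) \<le> ennreal (\<sigma> ^ 2)" using var unfolding e_def .
  have e2i: "integrable P (\<lambda>w. norm (e w)^2)"
  proof (rule integrableI_bounded[OF em])
    have "(\<integral>\<^sup>+ w. ennreal (norm (norm (e w)^2)) \<partial>P) = (\<integral>\<^sup>+ w. ennreal (norm (e w) ^ 2) \<partial>P)" by simp
    also have "\<dots> < \<infinity>" using var' by (simp add: le_less_trans)
    finally show "(\<integral>\<^sup>+ w. ennreal (norm (norm (e w)^2)) \<partial>P) < \<infinity>" .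
  qed
  have ie2: "(\<integral>w. norm (e w)^2 \<partial>P) \<le> \<sigma>^2"
  proof -
    have "ennreal (\<integral>w. norm (e w)^2 \<partial>P) = (\<integral>\<^sup>+ w. ennreal (norm (e w) ^ 2) \<partial>P)"
      by (rule nn_integral_eq_integral[OF e2i, symmetric]) auto
    with var' have "ennreal (\<integral>w. norm (e w)^2 \<partial>P) \<le> ennreal (\<sigma>^2)" by simp
    then show ?thesis by (simp add: ennreal_le_iff)
  qed
  define F where "F w = norm v0 ^2 - 2 * \<alpha> * inner v0 (e w) + \<alpha>^2 * norm (e w)^2" for w
  have Fi: "integrable P F" unfolding F_def using ei e2i by simp
  have iF: "(\<integral>w. F w \<partial>P) = norm v0 ^2 + \<alpha>^2 * (\<integral>w. norm (e w)^2 \<partial>P)"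
    unfolding F_def using ei e2i ie by (simp add: prob_space)
  have Fnn: "F w \<ge> 0" for w unfolding F_def sq[symmetric] by simp
  have "(\<integral>\<^sup>+ w. ennreal (norm (prox \<alpha> r (x - \<alpha> *\<^sub>R G x w) - xh x) ^ 2) \<partial>P) \<le> (\<integral>\<^sup>+ w. ennreal (F w) \<partial>P)"
  proof (rule nn_integral_mono)
    fix w
    have "norm (prox \<alpha> r (x - \<alpha> *\<^sub>R G x w) - u)^2 \<le> norm (v0 - \<alpha> *\<^sub>R e w)^2"
      using pw[of w] by (simp add: power_mono)
    then show "ennreal (norm (prox \<alpha> r (x - \<alpha> *\<^sub>R G x w) - xh x) ^ 2) \<le> ennreal (F w)"
      unfolding F_def sq[symmetric] u_def by (simp add: ennreal_leI)
  qed
  also have "\<dots> = ennreal (\<integral>w. F w \<partial>P)" by (rule nn_integral_eq_integral[OF Fi]) (use Fnn in auto)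
  also have "\<dots> \<le> ennreal (norm v0 ^2 + \<alpha>^2 * \<sigma>^2)"
    unfolding iF using ie2 by (intro ennreal_leI) (simp add: mult_left_mono)
  also have "\<dots> \<le> ennreal (norm (x - xh x) ^ 2 + \<alpha>^2 * \<sigma>^2 - \<alpha> * (\<rho>b - \<rho>) * norm (x - xh x) ^ 2)"
  proof (intro ennreal_leI)
    define c where "c = \<alpha> * (\<rho>b - \<rho>)"
    have c: "0 \<le> c" "c \<le> 1" unfolding c_def using al rb rp arb
      by (auto simp: algebra_simps) (smt (verit) mult_pos_pos)
    have "norm v0 \<le> norm ((1 - \<alpha> * \<rho>b) *\<^sub>R \<delta>) + norm (\<alpha> *\<^sub>R (gf x - gf u))"
      unfolding v0_def by (rule norm_triangle_ineq4)
    also have "\<dots> \<le> (1 - \<alpha> * \<rho>b) * norm \<delta> + \<alpha> * (\<rho> * norm \<delta>)"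
      using arb al lip[of x u] by (simp add: \<delta>_def mult_left_mono)
    also have "\<dots> = (1 - c) * norm \<delta>" unfolding c_def by (simp add: algebra_simps)
    finally have "norm v0 \<le> (1 - c) * norm \<delta>" .
    then have "norm v0 ^2 \<le> ((1 - c) * norm \<delta>)^2" by (simp add: power_mono)
    also have "\<dots> = (1 - c)^2 * norm \<delta> ^2" by (simp add: power_mult_distrib)
    also have "\<dots> \<le> (1 - c) * norm \<delta> ^2"
      using c mult_left_mono[of "1 - c" 1 "1 - c"] by (intro mult_right_mono) (auto simp: power2_eq_square)
    finally show "norm v0 ^2 + \<alpha>^2 * \<sigma>^2 \<le> norm (x - xh x) ^ 2 + \<alpha>^2 * \<sigma>^2 - \<alpha> * (\<rho>b - \<rho>) * norm (x - xh x) ^ 2"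
      unfolding c_def \<delta>_def u_def by (simp add: algebra_simps)
  qed
  finally show ?thesis .
qed

end

lemma prox_cont:
  fixes r :: "'a::euclidean_space \<Rightarrow> ereal"
  assumes "\<alpha> > 0" "proper_fun r" "closed_fun r" "convex_fun r"
  shows "continuous_on UNIV (prox \<alpha> r)"
  by (rule lipschitz_on_continuous_on[where L=1], rule lipschitz_onI)
     (use prox_nonexp[OF assms] in \<open>auto simp: dist_norm\<close>)



primrec iterH :: "(nat \<Rightarrow> 'a \<Rightarrow> 'w \<Rightarrow> 'a) \<Rightarrow> 'a \<Rightarrow> nat \<Rightarrow> (nat \<Rightarrow> 'w) \<Rightarrow> 'a" where
  "iterH st x0 0 y = x0"
| "iterH st x0 (Suc t) y = st t (iterH st x0 t y) (y t)"

lemma iterH_cong: "(\<And>i. i < t \<Longrightarrow> y i = y' i) \<Longrightarrow> iterH st x0 t y = iterH st x0 t y'"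
  by (induction t) auto

theorem lemma3p5:
  fixes \<rho> \<rho>b \<sigma> :: real
    and f :: "'a::euclidean_space \<Rightarrow> real" and gf :: "'a \<Rightarrow> 'a"
    and r :: "'a \<Rightarrow> ereal"
    and P :: "'w measure" and G :: "'a \<Rightarrow> 'w \<Rightarrow> 'a" and U :: "'a set"
    and M :: "'s measure" and \<xi> :: "nat \<Rightarrow> 's \<Rightarrow> 'w"
    and x0 :: 'a and \<alpha> :: "nat \<Rightarrow> real" and X :: "nat \<Rightarrow> 's \<Rightarrow> 'a"
  assumes rho_pos: "\<rho> > 0"
    and f_grad: "\<And>x. (f has_derivative (\<lambda>h. gf x \<bullet> h)) (at x)"
    and gf_lip: "\<And>x y. norm (gf x - gf y) \<le> \<rho> * norm (x - y)"
    and r_proper: "proper_fun r" and r_closed: "closed_fun r" and r_convex: "convex_fun r"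
    \<comment> \<open>(A1): xi_0, xi_1, ... i.i.d. with law P\<close>
    and P_prob: "prob_space P" and M_prob: "prob_space M"
    and xi_meas: "\<And>t. \<xi> t \<in> measurable M P"
    and xi_dist: "\<And>t. distr M P (\<xi> t) = P"
    and xi_indep: "prob_space.indep_vars M (\<lambda>_. P) \<xi> UNIV"
    \<comment> \<open>(A2)\<close>
    and U_open: "open U" and U_dom: "edom r \<subseteq> U"
    and G_meas: "(\<lambda>(x, w). G x w) \<in> borel_measurable (restrict_space (borel \<Otimes>\<^sub>M P) (U \<times> space P))"
    and G_integrable: "\<And>x. x \<in> U \<Longrightarrow> integrable P (G x)"
    and G_unbiased: "\<And>x. x \<in> U \<Longrightarrow> (\<integral>w. G x w \<partial>P) = gf x"
    \<comment> \<open>(A3-bar)\<close>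
    and sigma_nonneg: "\<sigma> \<ge> 0"
    and G_var: "\<And>x. x \<in> edom r \<Longrightarrow> (\<integral>\<^sup>+ w. ennreal (norm (G x w - gf x) ^ 2) \<partial>P) \<le> ennreal (\<sigma> ^ 2)"
    \<comment> \<open>iteration\<close>
    and x0_dom: "x0 \<in> edom r"
    and X_0: "\<And>\<omega>. X 0 \<omega> = x0"
    and X_Suc: "\<And>t \<omega>. X (Suc t) \<omega> = prox (\<alpha> t) r (X t \<omega> - \<alpha> t *\<^sub>R G (X t \<omega>) (\<xi> t \<omega>))"
    and rhob_gt: "\<rho>b > \<rho>"
    and alpha_pos: "\<And>t. 0 < \<alpha> t" and alpha_le: "\<And>t. \<alpha> t \<le> 1 / \<rho>b"
  shows "\<forall>t. AE \<omega> in M.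
     (let xh = argmin (\<lambda>y. ereal (f y) + r y + ereal (\<rho>b / 2 * norm (y - X t \<omega>) ^ 2))
      in nn_cond_exp M
           (vimage_algebra (space M) (\<lambda>\<omega>'. \<lambda>i\<in>{..<t}. \<xi> i \<omega>') (PiM {..<t} (\<lambda>_. P)))
           (\<lambda>\<omega>'. ennreal (norm (X (Suc t) \<omega>' -
               argmin (\<lambda>y. ereal (f y) + r y + ereal (\<rho>b / 2 * norm (y - X t \<omega>') ^ 2))) ^ 2)) \<omega>
         \<le> ennreal (norm (X t \<omega> - xh) ^ 2 + (\<alpha> t)^2 * \<sigma>^2
                    - \<alpha> t * (\<rho>b - \<rho>) * norm (X t \<omega> - xh) ^ 2))"
proof
  fix t :: nat
  interpret M: prob_space M by (rule M_prob)
  interpret P: prob_space P by (rule P_prob)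
  define st where "st = (\<lambda>t x w. prox (\<alpha> t) r (x - \<alpha> t *\<^sub>R G x w))"
  have XH: "X n \<omega> = iterH st x0 n (\<lambda>i. \<xi> i \<omega>)" for n \<omega>
    by (induction n) (simp_all add: X_0 X_Suc st_def)
  have Hdom: "iterH st x0 n y \<in> edom r" for n y
    by (cases n) (simp_all add: x0_dom st_def prox_dom[OF alpha_pos r_proper r_closed r_convex])
  have pc: "continuous_on UNIV (prox (\<alpha> n) r)" for n
    by (rule prox_cont[OF alpha_pos r_proper r_closed r_convex])
  have Gcomp: "(\<lambda>z. G (h z) (k z)) \<in> borel_measurable N"
    if "h \<in> borel_measurable N" "k \<in> measurable N P" "\<And>z. h z \<in> edom r" for h k and N :: "'q measure"
  proof -
    have "(\<lambda>z. (h z, k z)) \<in> measurable N (restrict_space (borel \<Otimes>\<^sub>M P) (U \<times> space P))"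
    proof (rule measurable_restrict_space2)
      show "(\<lambda>z. (h z, k z)) \<in> space N \<rightarrow> U \<times> space P"
        using that(3) U_dom measurable_space[OF that(2)] by auto
      show "(\<lambda>z. (h z, k z)) \<in> measurable N (borel \<Otimes>\<^sub>M P)" using that(1,2) by (rule measurable_Pair)
    qed
    from measurable_compose[OF this G_meas] show ?thesis by simp
  qed
  have stm: "(\<lambda>z. st n (h z) (k z)) \<in> borel_measurable N"
    if "h \<in> borel_measurable N" "k \<in> measurable N P" "\<And>z. h z \<in> edom r" for h k n and N :: "'q measure"
  proof -
    have "(\<lambda>z. h z - \<alpha> n *\<^sub>R G (h z) (k z)) \<in> borel_measurable N"
      using that(1) Gcomp[OF that] by (intro borel_measurable_diff borel_measurable_scaleR) auto
    from measurable_compose[OF this borel_measurable_continuous_onI[OF pc]]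
    show ?thesis by (simp add: st_def)
  qed
  have Hmeas: "iterH st x0 n \<in> borel_measurable (PiM {..<m} (\<lambda>_. P))" if "n \<le> m" for n m
    using that
  proof (induction n)
    case 0 then show ?case by simp
  next
    case (Suc n)
    have h: "iterH st x0 n \<in> borel_measurable (PiM {..<m} (\<lambda>_. P))" using Suc by simp
    have c: "(\<lambda>y. y n) \<in> measurable (PiM {..<m} (\<lambda>_. P)) P" using Suc by (intro measurable_component_singleton) simp
    show ?case using stm[OF h c Hdom, of n] by simp
  qed
  let ?S = "PiM {..<t} (\<lambda>_. P)"
  define Y where "Y = (\<lambda>\<omega>. \<lambda>i\<in>{..<t}. \<xi> i \<omega>)"
  define F where "F = vimage_algebra (space M) Y ?S"
  have Ym: "Y \<in> measurable M ?S" unfolding Y_def by (intro measurable_restrict xi_meas)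
  have XtY: "X t \<omega> = iterH st x0 t (Y \<omega>)" for \<omega>
    unfolding XH Y_def by (rule iterH_cong) simp
  have XSY: "X (Suc t) \<omega> = st t (iterH st x0 t (Y \<omega>)) (\<xi> t \<omega>)" for \<omega>
    using XH[of "Suc t" \<omega>] XH[of t \<omega>] XtY[of \<omega>] by simp
  define xhh where "xhh = xh f \<rho>b r"
  have xhc: "continuous_on UNIV xhh" unfolding xhh_def
    by (rule xh_cont[OF f_grad gf_lip rho_pos rhob_gt r_proper r_closed r_convex])
  define K where "K p = ennreal (norm (st t (iterH st x0 t (fst p)) (snd p) - xhh (iterH st x0 t (fst p)))^2)" for p
  have Km: "K \<in> borel_measurable (?S \<Otimes>\<^sub>M P)"
  proof -
    have h: "(\<lambda>p. iterH st x0 t (fst p)) \<in> borel_measurable (?S \<Otimes>\<^sub>M P)"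
      using measurable_compose[OF measurable_fst Hmeas[of t t]] by simp
    have a: "(\<lambda>p. st t (iterH st x0 t (fst p)) (snd p)) \<in> borel_measurable (?S \<Otimes>\<^sub>M P)"
      by (rule stm[OF h measurable_snd Hdom])
    have b: "(\<lambda>p. xhh (iterH st x0 t (fst p))) \<in> borel_measurable (?S \<Otimes>\<^sub>M P)"
      using measurable_compose[OF h borel_measurable_continuous_onI[OF xhc]] by simp
    show ?thesis unfolding K_def using a b by measurable
  qed
  define \<psi> where "\<psi> y = (\<integral>\<^sup>+w. K (y, w) \<partial>P)" for y
  have \<psi>m: "\<psi> \<in> borel_measurable ?S" unfolding \<psi>_def by (rule P.borel_measurable_nn_integral_fst[OF Km])
  have Ysp: "Y \<in> space M \<rightarrow> space ?S" using measurable_space[OF Ym] by auto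
  have sub: "subalgebra M F" unfolding subalgebra_def F_def
    using measurable_sets[OF Ym] by (auto simp: sets_vimage_algebra2[OF Ysp])
  interpret FS: finite_measure_subalgebra M F
    by (simp add: finite_measure_subalgebra_def finite_measure_subalgebra_axioms_def sub M.finite_measure_axioms)
  define \<Phi> where "\<Phi> = (\<lambda>\<omega>. ennreal (norm (X (Suc t) \<omega> - xhh (X t \<omega>))^2))"
  have \<Phi>K: "\<Phi> \<omega> = K (Y \<omega>, \<xi> t \<omega>)" for \<omega>
    unfolding \<Phi>_def K_def XSY XtY by simp
  have pairm: "(\<lambda>\<omega>. (Y \<omega>, \<xi> t \<omega>)) \<in> measurable M (?S \<Otimes>\<^sub>M P)"
    using Ym xi_meas[of t] by (rule measurable_Pair)
  have ind0: "M.indep_var ?S Y (PiM {t} (\<lambda>_. P)) (\<lambda>\<omega>. \<lambda>i\<in>{t}. \<xi> i \<omega>)"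
    unfolding Y_def by (rule M.indep_var_restrict[OF xi_indep]) auto
  let ?T = "PiM {t} (\<lambda>_. P)"
  define Z where "Z = (\<lambda>\<omega>. \<lambda>i\<in>{t}. \<xi> i \<omega>)"
  have Zm: "Z \<in> measurable M ?T" unfolding Z_def by (intro measurable_restrict xi_meas)
  have deq: "distr M ?S Y \<Otimes>\<^sub>M distr M ?T Z = distr M (?S \<Otimes>\<^sub>M ?T) (\<lambda>\<omega>. (Y \<omega>, Z \<omega>))"
    using ind0 unfolding M.indep_var_distribution_eq Z_def by simp
  have pairZ: "(\<lambda>\<omega>. (Y \<omega>, Z \<omega>)) \<in> measurable M (?S \<Otimes>\<^sub>M ?T)"
    using Ym Zm by (rule measurable_Pair)
  interpret DZ: prob_space "distr M ?T Z" by (rule M.prob_space_distr[OF Zm])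
  have ae: "AE \<omega> in M. \<psi> (Y \<omega>) = nn_cond_exp M F \<Phi> \<omega>"
  proof (rule FS.nn_cond_exp_charact)
    show "\<Phi> \<in> borel_measurable M" unfolding \<Phi>K[abs_def]
      by (rule measurable_compose[OF pairm Km])
    show "(\<lambda>\<omega>. \<psi> (Y \<omega>)) \<in> borel_measurable F" unfolding F_def
      by (rule measurable_compose[OF measurable_vimage_algebra1[OF Ysp] \<psi>m])
    fix A assume "A \<in> sets F"
    then obtain B where B: "B \<in> sets ?S" "A = Y -` B \<inter> space M"
      unfolding F_def sets_vimage_algebra2[OF Ysp] by auto
    define K' where "K' p = K p * indicator B (fst p)" for p
    have K'm: "K' \<in> borel_measurable (?S \<Otimes>\<^sub>M P)" unfolding K'_def using Km B(1) by measurable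
    define K2 where "K2 p = K' (fst p, snd p t)" for p
    have sn: "(\<lambda>p. snd p t) \<in> measurable (?S \<Otimes>\<^sub>M ?T) P"
      using measurable_compose[OF measurable_snd measurable_component_singleton[of t "{t}" "\<lambda>_. P"]] by simp
    have K2m: "K2 \<in> borel_measurable (?S \<Otimes>\<^sub>M ?T)" unfolding K2_def
      using measurable_compose[OF measurable_Pair[OF measurable_fst sn] K'm] by simp
    have "(\<integral>\<^sup>+x\<in>A. \<Phi> x \<partial>M) = (\<integral>\<^sup>+\<omega>. K2 (Y \<omega>, Z \<omega>) \<partial>M)"
      by (rule nn_integral_cong) (auto simp: K2_def K'_def \<Phi>K B(2) indicator_def Z_def)
    also have "\<dots> = (\<integral>\<^sup>+p. K2 p \<partial>distr M (?S \<Otimes>\<^sub>M ?T) (\<lambda>\<omega>. (Y \<omega>, Z \<omega>)))"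
      by (rule nn_integral_distr[symmetric, OF pairZ]) (use K2m in simp)
    also have "\<dots> = (\<integral>\<^sup>+p. K2 p \<partial>(distr M ?S Y \<Otimes>\<^sub>M distr M ?T Z))" by (simp add: deq)
    also have "\<dots> = (\<integral>\<^sup>+y. \<integral>\<^sup>+z. K2 (y, z) \<partial>distr M ?T Z \<partial>distr M ?S Y)"
      by (rule DZ.nn_integral_fst[symmetric]) (use K2m in \<open>simp cong: measurable_cong_sets\<close>)
    also have "\<dots> = (\<integral>\<^sup>+y. \<integral>\<^sup>+w. K' (y, w) \<partial>P \<partial>distr M ?S Y)"
    proof (rule nn_integral_cong)
      fix y assume y: "y \<in> space (distr M ?S Y)"
      have m1: "(\<lambda>w. K' (y, w)) \<in> borel_measurable P"
        using measurable_Pair2[OF K'm, of y] y by simp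
      have m2: "(\<lambda>z. K' (y, z t)) \<in> borel_measurable ?T"
        using measurable_compose[OF measurable_component_singleton[of t "{t}" "\<lambda>_. P"] m1] by simp
      have "(\<integral>\<^sup>+z. K2 (y, z) \<partial>distr M ?T Z) = (\<integral>\<^sup>+\<omega>. K' (y, Z \<omega> t) \<partial>M)"
        unfolding K2_def fst_conv snd_conv by (rule nn_integral_distr[OF Zm]) (use m2 in simp)
      also have "\<dots> = (\<integral>\<^sup>+\<omega>. K' (y, \<xi> t \<omega>) \<partial>M)" by (simp add: Z_def)
      also have "\<dots> = (\<integral>\<^sup>+w. K' (y, w) \<partial>distr M P (\<xi> t))"
        by (rule nn_integral_distr[symmetric, OF xi_meas]) (use m1 in simp)
      finally show "(\<integral>\<^sup>+z. K2 (y, z) \<partial>distr M ?T Z) = (\<integral>\<^sup>+w. K' (y, w) \<partial>P)"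
        by (simp add: xi_dist)
    qed
    also have "\<dots> = (\<integral>\<^sup>+y. \<psi> y * indicator B y \<partial>distr M ?S Y)"
    proof (rule nn_integral_cong)
      fix y assume y: "y \<in> space (distr M ?S Y)"
      have "(\<lambda>w. K (y, w)) \<in> borel_measurable P"
        using measurable_Pair2[OF Km, of y] y by simp
      then show "(\<integral>\<^sup>+w. K' (y, w) \<partial>P) = \<psi> y * indicator B y"
        unfolding K'_def \<psi>_def by (simp add: nn_integral_multc)
    qed
    also have "\<dots> = (\<integral>\<^sup>+\<omega>. \<psi> (Y \<omega>) * indicator B (Y \<omega>) \<partial>M)"
      by (rule nn_integral_distr[OF Ym]) (use \<psi>m B(1) in simp)
    also have "\<dots> = (\<integral>\<^sup>+x\<in>A. \<psi> (Y x) \<partial>M)"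
      by (rule nn_integral_cong) (auto simp: B(2) indicator_def)
    finally show "(\<integral>\<^sup>+x\<in>A. \<Phi> x \<partial>M) = (\<integral>\<^sup>+x\<in>A. \<psi> (Y x) \<partial>M)" .
  qed
  have bnd: "\<psi> (Y \<omega>) \<le> ennreal (norm (X t \<omega> - xhh (X t \<omega>)) ^ 2 + (\<alpha> t)^2 * \<sigma>^2
                    - \<alpha> t * (\<rho>b - \<rho>) * norm (X t \<omega> - xhh (X t \<omega>)) ^ 2)" for \<omega>
  proof -
    have d: "X t \<omega> \<in> edom r" using XtY Hdom by simp
    have dU: "X t \<omega> \<in> U" using d U_dom by auto
    have "\<psi> (Y \<omega>) = (\<integral>\<^sup>+ w. ennreal (norm (prox (\<alpha> t) r (X t \<omega> - \<alpha> t *\<^sub>R G (X t \<omega>) w) - xhh (X t \<omega>)) ^ 2) \<partial>P)"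
      unfolding \<psi>_def K_def by (simp add: XtY st_def)
    also have "\<dots> \<le> ennreal (norm (X t \<omega> - xhh (X t \<omega>)) ^ 2 + (\<alpha> t)^2 * \<sigma>^2
                    - \<alpha> t * (\<rho>b - \<rho>) * norm (X t \<omega> - xhh (X t \<omega>)) ^ 2)" unfolding xhh_def
      by (rule step_bound[where x="X t \<omega>" and \<alpha>="\<alpha> t" and G=G and P=P, OF f_grad gf_lip rho_pos rhob_gt r_proper r_closed r_convex P_prob
            G_integrable[OF dU] G_unbiased[OF dU] G_var[OF d] sigma_nonneg alpha_pos alpha_le])
    finally show ?thesis .
  qed
  have "AE \<omega> in M. nn_cond_exp M F \<Phi> \<omega> \<le> ennreal (norm (X t \<omega> - xhh (X t \<omega>)) ^ 2 + (\<alpha> t)^2 * \<sigma>^2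
                    - \<alpha> t * (\<rho>b - \<rho>) * norm (X t \<omega> - xhh (X t \<omega>)) ^ 2)"
    using ae by eventually_elim (metis bnd)
  then show "AE \<omega> in M.
     (let xh = argmin (\<lambda>y. ereal (f y) + r y + ereal (\<rho>b / 2 * norm (y - X t \<omega>) ^ 2))
      in nn_cond_exp M
           (vimage_algebra (space M) (\<lambda>\<omega>'. \<lambda>i\<in>{..<t}. \<xi> i \<omega>') (PiM {..<t} (\<lambda>_. P)))
           (\<lambda>\<omega>'. ennreal (norm (X (Suc t) \<omega>' -
               argmin (\<lambda>y. ereal (f y) + r y + ereal (\<rho>b / 2 * norm (y - X t \<omega>') ^ 2))) ^ 2)) \<omega>
         \<le> ennreal (norm (X t \<omega> - xh) ^ 2 + (\<alpha> t)^2 * \<sigma>^2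
                    - \<alpha> t * (\<rho>b - \<rho>) * norm (X t \<omega> - xh) ^ 2))"
    unfolding F_def Y_def \<Phi>_def xhh_def by (simp add: xh_def[OF f_grad gf_lip rho_pos rhob_gt r_proper r_closed r_convex] Let_def)
qed


end
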